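(* Let $0<\alpha<1$. Let $P,Q$ be probability measures on $\mathbb{R}^d$, both absolutely continuous with respect to a probability measure $\mu$. Let $\mathbf{x}_1,\dots,\mathbf{x}_N\in\mathbb{R}^d$ with $q_i:=\frac{dQ}{d\mu}(\mathbf{x}_i)>0$ and $p_i:=\frac{dP}{d\mu}(\mathbf{x}_i)>0$ for $1\le i\le N$. For $L>0$ let $I_L^i=[-L-\log\frac{q_i}{p_i},\,L-\log\frac{q_i}{p_i}]$ and define $f^{(N)}:I_L^1\times\cdots\times I_L^N\to\mathbb{R}$ by $$f^{(N)}(\mathbf{t})=f^{(N)}(t_1,\dots,t_N)=\frac{1}{\alpha}\frac{1}{N}\sum_{i=1}^N e^{\alpha t_i}q_i+\frac{1}{1-\alpha}\frac{1}{N}\sum_{i=1}^N e^{(\alpha-1)t_i}p_i .$$ Let $\frac{\lambda}{2}=\frac{1}{N}\min_{1\le i\le N}\big\{e^{-L}q_i^{1-\alpha}p_i^{\alpha}\big\}$. Then for all $\mathbf{t}$ in the domain, $$\mathbf{t}^{T}\,\nabla^2 f^{(N)}(\mathbf{t})\,\mathbf{t}=\sum_{1\le i,j\le N}t_it_j\frac{\partial^2 f^{(N)}}{\partial t_i\partial t_j}(\mathbf{t})\ge\frac{\lambda}{2}\|\mathbf{t}\|^2 .$$ Moreover, with $D_i=2e^{L}q_i^{1-\alpha}p_i^{\alpha}$ and $D=\max\{D_1,\dots,D_N\}$, we have $\|\nabla f^{(N)}(\mathbf{t})\|^2\le D^2$ for all $\mathbf{t}\in I_L^1\times\cdots\times I_L^N$,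 and $f^{(N)}$ is minimized at $\mathbf{t}_*=(-\log\frac{q_1}{p_1},\dots,-\log\frac{q_N}{p_N})$.
   Context: $\|\cdot\|$ is the Euclidean norm; $\frac{dQ}{d\mu},\frac{dP}{d\mu}$ are Radon–Nikodým derivatives. *)

theory Defs
  imports "HOL-Probability.Probability"
begin

text \<open>The formula is taken as defined on all of R^N (it is smooth there); the paper's
  f^(N) is its restriction to the box I_L^1 x ... x I_L^N.\<close>
definition fN :: "real \<Rightarrow> ('n::finite \<Rightarrow> real) \<Rightarrow> ('n \<Rightarrow> real) \<Rightarrow> real^'n \<Rightarrow> real" where
  "fN \<alpha> q p t =
     (1/\<alpha>) * (1 / real CARD('n)) * (\<Sum>i\<in>UNIV. exp (\<alpha> * t$i) * q i)
   + (1/(1-\<alpha>)) * (1 / real CARD('n)) * (\<Sum>i\<in>UNIV. exp ((\<alpha> - 1) * t$i) * p i)"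

definition pderiv_at :: "'n::finite \<Rightarrow> (real^'n \<Rightarrow> real) \<Rightarrow> real^'n \<Rightarrow> real" where
  "pderiv_at i g t = deriv (\<lambda>s. g (\<chi> j. if j = i then s else t$j)) (t$i)"

definition grad :: "(real^'n::finite \<Rightarrow> real) \<Rightarrow> real^'n \<Rightarrow> real^'n" where
  "grad g t = (\<chi> i. pderiv_at i g t)"

definition hess_quad :: "(real^'n::finite \<Rightarrow> real) \<Rightarrow> real^'n \<Rightarrow> real" where
  "hess_quad g t = (\<Sum>i\<in>UNIV. \<Sum>j\<in>UNIV. t$i * t$j * pderiv_at i (pderiv_at j g) t)"

definition boxL :: "real \<Rightarrow> ('n::finite \<Rightarrow> real) \<Rightarrow> ('n \<Rightarrow> real) \<Rightarrow> (real^'n) set" where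
  "boxL L q p = {t. \<forall>i. - L - ln (q i / p i) \<le> t$i \<and> t$i \<le> L - ln (q i / p i)}"

end

theory Submission
  imports Defs
begin

lemma pderiv_sep:
  fixes h :: "'n::finite \<Rightarrow> real \<Rightarrow> real"
  assumes "\<And>x. (h i has_real_derivative h' x) (at x)"
  shows "pderiv_at i (\<lambda>t. \<Sum>k\<in>UNIV. h k (t$k)) t = h' (t$i)"
proof -
  have eq: "(\<lambda>s. \<Sum>k\<in>UNIV. h k ((\<chi> j. if j = i then s else t$j)$k))
      = (\<lambda>s. h i s + (\<Sum>k\<in>UNIV-{i}. h k (t$k)))"
  proof
    fix s
    have "(\<Sum>k\<in>UNIV. h k ((\<chi> j. if j = i then s else t$j)$k))
        = h i ((\<chi> j. if j = i then s else t$j)$i) + (\<Sum>k\<in>UNIV-{i}. h k ((\<chi> j. if j = i then s else t$j)$k))"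
      by (rule sum.remove) auto
    also have "\<dots> = h i s + (\<Sum>k\<in>UNIV-{i}. h k (t$k))"
      by (intro arg_cong2[where f="(+)"] sum.cong) auto
    finally show "(\<Sum>k\<in>UNIV. h k ((\<chi> j. if j = i then s else t$j)$k)) = h i s + (\<Sum>k\<in>UNIV-{i}. h k (t$k))" .
  qed
  have "((\<lambda>s. h i s + (\<Sum>k\<in>UNIV-{i}. h k (t$k))) has_real_derivative h' (t$i) + 0) (at (t$i))"
    by (intro derivative_intros assms)
  then show ?thesis unfolding pderiv_at_def eq by (simp add: DERIV_imp_deriv)
qed

lemma main:
  fixes \<alpha> L :: real and q p :: "'n::finite \<Rightarrow> real"
  assumes a0: "0 < \<alpha>" and a1: "\<alpha> < 1" and qpos: "\<forall>i. q i > 0" and ppos: "\<forall>i. p i > 0" and L0: "L > 0"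
  shows
    "let N = real CARD('n);
         f = fN \<alpha> q p;
         half_lambda = (1 / N) * Min (range (\<lambda>i. exp (- L) * q i powr (1 - \<alpha>) * p i powr \<alpha>));
         D = Max (range (\<lambda>i. 2 * exp L * q i powr (1 - \<alpha>) * p i powr \<alpha>));
         tstar = (\<chi> i. - ln (q i / p i))
     in (\<forall>t\<in>boxL L q p. hess_quad f t \<ge> half_lambda * (norm t)\<^sup>2)
      \<and> (\<forall>t\<in>boxL L q p. (norm (grad f t))\<^sup>2 \<le> D\<^sup>2)
      \<and> tstar \<in> boxL L q p \<and> (\<forall>t\<in>boxL L q p. f tstar \<le> f t)"
proof -
  define N where "N = real CARD('n)"
  have N0: "N > 0" unfolding N_def by simp
  have N1: "N \<ge> 1" unfolding N_def by (simp add: Suc_leI)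
  define C where "C i = q i powr (1 - \<alpha>) * p i powr \<alpha>" for i
  have C0: "C i > 0" for i using qpos[rule_format, of i] ppos[rule_format, of i] unfolding C_def by simp
  define g where "g k x = (1/\<alpha>) * (1/N) * (exp (\<alpha> * x) * q k) + (1/(1-\<alpha>)) * (1/N) * (exp ((\<alpha> - 1) * x) * p k)" for k x
  define g' where "g' k x = (1/N) * (exp (\<alpha> * x) * q k - exp ((\<alpha> - 1) * x) * p k)" for k x
  define g'' where "g'' k x = (1/N) * (\<alpha> * exp (\<alpha> * x) * q k + (1 - \<alpha>) * exp ((\<alpha> - 1) * x) * p k)" for k x
  have f_eq: "fN \<alpha> q p = (\<lambda>t. \<Sum>k\<in>UNIV. g k (t$k))"
    unfolding fN_def g_def N_def by (auto simp: sum.distrib sum_distrib_left)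
  have dg: "(g k has_real_derivative g' k x) (at x)" for k x
  proof -
    have "(g k has_real_derivative (1/\<alpha>) * (1/N) * (exp (\<alpha> * x) * (\<alpha> * 1) * q k) + (1/(1-\<alpha>)) * (1/N) * (exp ((\<alpha> - 1) * x) * ((\<alpha> - 1) * 1) * p k)) (at x)"
      unfolding g_def by (intro derivative_eq_intros) auto
    moreover have "(1/\<alpha>) * (1/N) * (exp (\<alpha> * x) * (\<alpha> * 1) * q k) + (1/(1-\<alpha>)) * (1/N) * (exp ((\<alpha> - 1) * x) * ((\<alpha> - 1) * 1) * p k) = g' k x"
      unfolding g'_def using a0 a1 N0 by (simp add: field_simps)
    ultimately show ?thesis by simp
  qed
  have dg': "(g' k has_real_derivative g'' k x) (at x)" for k x
  proof -
    have "(g' k has_real_derivative (1/N) * (exp (\<alpha> * x) * (\<alpha> * 1) * q k - exp ((\<alpha> - 1) * x) * ((\<alpha> - 1) * 1) * p k)) (at x)"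
      unfolding g'_def by (intro derivative_eq_intros) auto
    moreover have "(1/N) * (exp (\<alpha> * x) * (\<alpha> * 1) * q k - exp ((\<alpha> - 1) * x) * ((\<alpha> - 1) * 1) * p k) = g'' k x"
      unfolding g''_def by (simp add: field_simps)
    ultimately show ?thesis by simp
  qed
  have pd1: "pderiv_at j (fN \<alpha> q p) = (\<lambda>t. g' j (t$j))" for j
    unfolding f_eq by (rule ext, rule pderiv_sep, rule dg)
  have pd2: "pderiv_at i (pderiv_at j (fN \<alpha> q p)) t = (if i = j then g'' j (t$i) else 0)" for i j t
  proof -
    have e: "(\<lambda>t. g' j (t$j)) = (\<lambda>t. \<Sum>k\<in>UNIV. (if k = j then g' j else (\<lambda>_. 0)) (t$k))"
    proof
      fix t :: "real^'n"
      have "(\<Sum>k\<in>UNIV. (if k = j then g' j else (\<lambda>_. 0)) (t$k)) = (\<Sum>k\<in>UNIV. if k = j then g' j (t$k) else 0)"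
        by (rule sum.cong) auto
      then show "g' j (t$j) = (\<Sum>k\<in>UNIV. (if k = j then g' j else (\<lambda>_. 0)) (t$k))" by simp
    qed
    have "((if i = j then g' j else (\<lambda>_. 0)) has_real_derivative (if i = j then g'' j x else 0)) (at x)" for x
      by (cases "i = j") (auto intro: dg')
    then show ?thesis unfolding pd1 e by (rule pderiv_sep)
  qed
  have Cexp: "C k = exp ((1 - \<alpha>) * ln (q k) + \<alpha> * ln (p k))" for k
    using qpos[rule_format, of k] ppos[rule_format, of k] unfolding C_def by (simp add: powr_def exp_add)
  have shift1: "exp (\<alpha> * x) * q k = C k * exp (\<alpha> * (x + ln (q k / p k)))" for k x
  proof -
    have "C k * exp (\<alpha> * (x + ln (q k / p k))) = exp ((1 - \<alpha>) * ln (q k) + \<alpha> * ln (p k) + \<alpha> * (x + ln (q k) - ln (p k)))"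
      using qpos[rule_format, of k] ppos[rule_format, of k] by (simp add: Cexp ln_div exp_add[symmetric] algebra_simps)
    also have "\<dots> = exp (\<alpha> * x + ln (q k))" by (simp add: algebra_simps)
    also have "\<dots> = exp (\<alpha> * x) * q k" using qpos by (simp add: exp_add)
    finally show ?thesis by simp
  qed
  have shift2: "exp ((\<alpha> - 1) * x) * p k = C k * exp ((\<alpha> - 1) * (x + ln (q k / p k)))" for k x
  proof -
    have "C k * exp ((\<alpha> - 1) * (x + ln (q k / p k))) = exp ((1 - \<alpha>) * ln (q k) + \<alpha> * ln (p k) + (\<alpha> - 1) * (x + ln (q k) - ln (p k)))"
      using qpos[rule_format, of k] ppos[rule_format, of k] by (simp add: Cexp ln_div exp_add[symmetric] algebra_simps)
    also have "\<dots> = exp ((\<alpha> - 1) * x + ln (p k))" by (simp add: algebra_simps)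
    also have "\<dots> = exp ((\<alpha> - 1) * x) * p k" using ppos by (simp add: exp_add)
    finally show ?thesis by simp
  qed
  have sbound: "- L \<le> \<alpha> * s \<and> \<alpha> * s \<le> L \<and> - L \<le> (\<alpha> - 1) * s \<and> (\<alpha> - 1) * s \<le> L"
    if "- L \<le> s" "s \<le> L" for s
  proof (cases "s \<ge> 0")
    case True
    have "\<alpha> * s \<le> s" "(1 - \<alpha>) * s \<le> s" using True a0 a1 by (simp_all add: mult_left_le_one_le)
    moreover have "\<alpha> * s \<ge> 0" "(1 - \<alpha>) * s \<ge> 0" using True a0 a1 by simp_all
    ultimately show ?thesis using that by (auto simp: algebra_simps)
  next
    case False
    have "\<alpha> * (-s) \<le> -s" "(1 - \<alpha>) * (-s) \<le> -s" using False a0 a1 by (simp_all add: mult_left_le_one_le)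
    moreover have "\<alpha> * (-s) \<ge> 0" "(1 - \<alpha>) * (-s) \<ge> 0" using False a0 a1 by (simp_all add: mult_nonneg_nonpos)
    ultimately show ?thesis using that by (auto simp: algebra_simps)
  qed
  have inbox: "- L \<le> t$k + ln (q k / p k) \<and> t$k + ln (q k / p k) \<le> L" if "t \<in> boxL L q p" for t k
  proof -
    from that have "- L - ln (q k / p k) \<le> t$k \<and> t$k \<le> L - ln (q k / p k)" unfolding boxL_def by blast
    then show ?thesis by linarith
  qed
  have finR: "finite (range h)" for h :: "'n \<Rightarrow> real" by simp
  have P1: "hess_quad (fN \<alpha> q p) t \<ge> (1 / N) * Min (range (\<lambda>i. exp (- L) * q i powr (1 - \<alpha>) * p i powr \<alpha>)) * (norm t)\<^sup>2"
    if tb: "t \<in> boxL L q p" for t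
  proof -
    let ?m = "Min (range (\<lambda>i. exp (- L) * q i powr (1 - \<alpha>) * p i powr \<alpha>))"
    have hq: "hess_quad (fN \<alpha> q p) t = (\<Sum>i\<in>UNIV. (t$i)\<^sup>2 * g'' i (t$i))"
      unfolding hess_quad_def pd2 by (simp add: if_distrib power2_eq_square cong: if_cong)
    have nt: "(norm t)\<^sup>2 = (\<Sum>i\<in>UNIV. (t$i)\<^sup>2)"
      unfolding power2_norm_eq_inner inner_vec_def by (simp add: power2_eq_square)
    have each: "(1/N) * ?m * (t$i)\<^sup>2 \<le> (t$i)\<^sup>2 * g'' i (t$i)" for i
    proof -
      define s where "s = t$i + ln (q i / p i)"
      have sb: "- L \<le> \<alpha> * s \<and> \<alpha> * s \<le> L \<and> - L \<le> (\<alpha> - 1) * s \<and> (\<alpha> - 1) * s \<le> L"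
        using sbound inbox[OF tb, of i] unfolding s_def by blast
      have g''e: "g'' i (t$i) = (1/N) * C i * (\<alpha> * exp (\<alpha> * s) + (1 - \<alpha>) * exp ((\<alpha> - 1) * s))"
        unfolding g''_def s_def using shift1[of "t$i" i] shift2[of "t$i" i]
        by (simp add: algebra_simps)
      have "exp (- L) \<le> exp (\<alpha> * s)" "exp (- L) \<le> exp ((\<alpha> - 1) * s)" using sb by auto
      hence "\<alpha> * exp (- L) + (1 - \<alpha>) * exp (- L) \<le> \<alpha> * exp (\<alpha> * s) + (1 - \<alpha>) * exp ((\<alpha> - 1) * s)"
        using a0 a1 by (intro add_mono mult_left_mono) auto
      hence e1: "exp (- L) \<le> \<alpha> * exp (\<alpha> * s) + (1 - \<alpha>) * exp ((\<alpha> - 1) * s)" by (simp add: algebra_simps)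
      have "?m \<le> exp (- L) * C i" unfolding C_def by (simp add: mult.assoc)
      also have "\<dots> \<le> C i * (\<alpha> * exp (\<alpha> * s) + (1 - \<alpha>) * exp ((\<alpha> - 1) * s))"
        using e1 C0[of i] by (simp add: mult.commute mult_left_mono)
      finally have "(1/N) * ?m \<le> g'' i (t$i)" unfolding g''e using N0
        by (simp add: divide_right_mono mult.assoc)
      then have "(1/N) * ?m * (t$i)\<^sup>2 \<le> g'' i (t$i) * (t$i)\<^sup>2" by (rule mult_right_mono) simp
      then show ?thesis by (metis mult.commute)
    qed
    have "(1/N) * ?m * (norm t)\<^sup>2 = (\<Sum>i\<in>UNIV. (1/N) * ?m * (t$i)\<^sup>2)" unfolding nt by (simp add: sum_distrib_left)
    also have "\<dots> \<le> (\<Sum>i\<in>UNIV. (t$i)\<^sup>2 * g'' i (t$i))" by (rule sum_mono, rule each)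
    finally show ?thesis unfolding hq .
  qed
  have P2: "(norm (grad (fN \<alpha> q p) t))\<^sup>2 \<le> (Max (range (\<lambda>i. 2 * exp L * q i powr (1 - \<alpha>) * p i powr \<alpha>)))\<^sup>2"
    if tb: "t \<in> boxL L q p" for t
  proof -
    let ?D = "Max (range (\<lambda>i. 2 * exp L * q i powr (1 - \<alpha>) * p i powr \<alpha>))"
    have nt: "(norm (grad (fN \<alpha> q p) t))\<^sup>2 = (\<Sum>i\<in>UNIV. (g' i (t$i))\<^sup>2)"
      unfolding power2_norm_eq_inner inner_vec_def by (simp add: power2_eq_square grad_def pd1)
    have each: "(g' i (t$i))\<^sup>2 \<le> ?D\<^sup>2 / N" for i
    proof -
      define s where "s = t$i + ln (q i / p i)"
      have sb: "- L \<le> \<alpha> * s \<and> \<alpha> * s \<le> L \<and> - L \<le> (\<alpha> - 1) * s \<and> (\<alpha> - 1) * s \<le> L"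
        using sbound inbox[OF tb, of i] unfolding s_def by blast
      have g'e: "g' i (t$i) = (1/N) * C i * (exp (\<alpha> * s) - exp ((\<alpha> - 1) * s))"
        unfolding g'_def s_def using shift1[of "t$i" i] shift2[of "t$i" i]
        by (simp add: algebra_simps)
      have "exp (\<alpha> * s) \<le> exp L" "exp ((\<alpha> - 1) * s) \<le> exp L" using sb by auto
      hence ab: "\<bar>exp (\<alpha> * s) - exp ((\<alpha> - 1) * s)\<bar> \<le> exp L" using exp_gt_zero[of "\<alpha> * s"] exp_gt_zero[of "(\<alpha> - 1) * s"] unfolding abs_le_iff by linarith
      have Dge: "2 * exp L * C i \<le> ?D" unfolding C_def by (simp add: mult.assoc)
      have "\<bar>g' i (t$i)\<bar> = (1/N) * C i * \<bar>exp (\<alpha> * s) - exp ((\<alpha> - 1) * s)\<bar>"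
        unfolding g'e using C0[of i] N0 by (simp add: abs_mult)
      also have "\<dots> \<le> (1/N) * C i * exp L" using ab C0[of i] N0 by (intro mult_left_mono) auto
      also have "\<dots> \<le> (1/N) * ?D"
      proof -
        have "0 < C i * exp L" using C0[of i] by simp
        moreover have "2 * exp L * C i = 2 * (C i * exp L)" by simp
        ultimately have "C i * exp L \<le> ?D" using Dge by linarith
        then show ?thesis using N0 by (simp add: divide_right_mono)
      qed
      finally have ab2: "\<bar>g' i (t$i)\<bar> \<le> ?D / N" by simp
      have "(g' i (t$i))\<^sup>2 = \<bar>g' i (t$i)\<bar>\<^sup>2" by simp
      also have "\<dots> \<le> (?D / N)\<^sup>2" by (rule power_mono[OF ab2]) simp
      also have "\<dots> = ?D\<^sup>2 / N / N" by (simp add: power2_eq_square)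
      also have "\<dots> \<le> ?D\<^sup>2 / N" using N1 N0 mult_left_mono[OF N1, of "?D\<^sup>2"] by (simp add: divide_le_eq)
      finally show ?thesis .
    qed
    have "(\<Sum>i\<in>UNIV. (g' i (t$i))\<^sup>2) \<le> (\<Sum>i\<in>(UNIV::'n set). ?D\<^sup>2 / N)" by (rule sum_mono, rule each)
    also have "\<dots> = ?D\<^sup>2" unfolding N_def by simp
    finally show ?thesis unfolding nt .
  qed
  have P3: "(\<chi> i. - ln (q i / p i)) \<in> boxL L q p" unfolding boxL_def using L0 by auto
  have P4: "fN \<alpha> q p (\<chi> i. - ln (q i / p i)) \<le> fN \<alpha> q p t" for t
  proof -
    have each: "g i (- ln (q i / p i)) \<le> g i (t$i)" for i
    proof -
      define s where "s = t$i + ln (q i / p i)"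
      have ge: "g i x = (1/N) * C i * (exp (\<alpha> * (x + ln (q i / p i))) / \<alpha> + exp ((\<alpha> - 1) * (x + ln (q i / p i))) / (1 - \<alpha>))" for x
        unfolding g_def using shift1[of x i] shift2[of x i] by (simp add: algebra_simps)
      have "exp (\<alpha> * s) \<ge> 1 + \<alpha> * s" "exp ((\<alpha> - 1) * s) \<ge> 1 + (\<alpha> - 1) * s" by (rule exp_ge_add_one_self)+
      hence "exp (\<alpha> * s) / \<alpha> \<ge> (1 + \<alpha> * s) / \<alpha>" "exp ((\<alpha> - 1) * s) / (1 - \<alpha>) \<ge> (1 + (\<alpha> - 1) * s) / (1 - \<alpha>)"
        using a0 a1 by (auto intro: divide_right_mono)
      moreover have "(1 + \<alpha> * s) / \<alpha> + (1 + (\<alpha> - 1) * s) / (1 - \<alpha>) = 1 / \<alpha> + 1 / (1 - \<alpha>)"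
        using a0 a1 by (simp add: field_simps)
      ultimately have "1 / \<alpha> + 1 / (1 - \<alpha>) \<le> exp (\<alpha> * s) / \<alpha> + exp ((\<alpha> - 1) * s) / (1 - \<alpha>)" by linarith
      hence "(1/N) * C i * (1 / \<alpha> + 1 / (1 - \<alpha>)) \<le> (1/N) * C i * (exp (\<alpha> * s) / \<alpha> + exp ((\<alpha> - 1) * s) / (1 - \<alpha>))"
        using C0[of i] N0 by (intro mult_left_mono) auto
      then show ?thesis unfolding ge s_def by simp
    qed
    show ?thesis unfolding f_eq by (simp add: sum_mono each)
  qed
  show ?thesis unfolding Let_def N_def[symmetric] using P1 P2 P3 P4 by blast
qed

theorem corollary1:
  fixes \<alpha> L :: real
    and \<mu> P Q :: "'d::euclidean_space measure"
    and x :: "'n::finite \<Rightarrow> 'd"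
  assumes "0 < \<alpha>" "\<alpha> < 1"
    and "prob_space \<mu>" "prob_space P" "prob_space Q"
    and "sets \<mu> = sets borel" "sets P = sets borel" "sets Q = sets borel"
    and "absolutely_continuous \<mu> P" "absolutely_continuous \<mu> Q"
    and "\<forall>i. enn2real (RN_deriv \<mu> Q (x i)) > 0"
    and "\<forall>i. enn2real (RN_deriv \<mu> P (x i)) > 0"
    and "L > 0"
  shows
    "let q = (\<lambda>i. enn2real (RN_deriv \<mu> Q (x i)));
         p = (\<lambda>i. enn2real (RN_deriv \<mu> P (x i)));
         N = real CARD('n);
         f = fN \<alpha> q p;
         half_lambda = (1 / N) * Min (range (\<lambda>i. exp (- L) * q i powr (1 - \<alpha>) * p i powr \<alpha>));
         D = Max (range (\<lambda>i. 2 * exp L * q i powr (1 - \<alpha>) * p i powr \<alpha>));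
         tstar = (\<chi> i. - ln (q i / p i))
     in (\<forall>t\<in>boxL L q p. hess_quad f t \<ge> half_lambda * (norm t)\<^sup>2)
      \<and> (\<forall>t\<in>boxL L q p. (norm (grad f t))\<^sup>2 \<le> D\<^sup>2)
      \<and> tstar \<in> boxL L q p \<and> (\<forall>t\<in>boxL L q p. f tstar \<le> f t)"
  proof -
  have "let N = real CARD('n);
         f = fN \<alpha> (\<lambda>i. enn2real (RN_deriv \<mu> Q (x i))) (\<lambda>i. enn2real (RN_deriv \<mu> P (x i)));
         half_lambda = (1 / N) * Min (range (\<lambda>i. exp (- L) * (\<lambda>i. enn2real (RN_deriv \<mu> Q (x i))) i powr (1 - \<alpha>) * (\<lambda>i. enn2real (RN_deriv \<mu> P (x i))) i powr \<alpha>));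
         D = Max (range (\<lambda>i. 2 * exp L * (\<lambda>i. enn2real (RN_deriv \<mu> Q (x i))) i powr (1 - \<alpha>) * (\<lambda>i. enn2real (RN_deriv \<mu> P (x i))) i powr \<alpha>));
         tstar = (\<chi> i. - ln ((\<lambda>i. enn2real (RN_deriv \<mu> Q (x i))) i / (\<lambda>i. enn2real (RN_deriv \<mu> P (x i))) i))
     in (\<forall>t\<in>boxL L (\<lambda>i. enn2real (RN_deriv \<mu> Q (x i))) (\<lambda>i. enn2real (RN_deriv \<mu> P (x i))). hess_quad f t \<ge> half_lambda * (norm t)\<^sup>2)
      \<and> (\<forall>t\<in>boxL L (\<lambda>i. enn2real (RN_deriv \<mu> Q (x i))) (\<lambda>i. enn2real (RN_deriv \<mu> P (x i))). (norm (grad f t))\<^sup>2 \<le> D\<^sup>2)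
      \<and> tstar \<in> boxL L (\<lambda>i. enn2real (RN_deriv \<mu> Q (x i))) (\<lambda>i. enn2real (RN_deriv \<mu> P (x i)))
      \<and> (\<forall>t\<in>boxL L (\<lambda>i. enn2real (RN_deriv \<mu> Q (x i))) (\<lambda>i. enn2real (RN_deriv \<mu> P (x i))). f tstar \<le> f t)"
    by (rule main) (use assms in auto)
  then show ?thesis unfolding Let_def .
qed

end
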